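(* Let $A\in\mathbb{R}^{n\times d}$ have $i$-th row $y^{(i)}\mathbf{x}^{(i)\top}$ for data $\mathbf{x}^{(i)}\in\mathbb{R}^d$, $y^{(i)}\in\{-1,1\}$, and let $\alpha_t=t$. Consider: (Accelerated Perceptron.) $\mathbf{q}_0=\tfrac{\mathbf{1}}{n}$, $\mathbf{v}_0=\mathbf{0}$, $\mathbf{g}_0=\mathbf{0}$, $\theta_{t-1}=\frac{t}{2(t+1)}$, $\beta_t=\frac{t}{t+1}$; for $t=1,\dots,T$: $\mathbf{v}_t=\mathbf{v}_{t-1}-\theta_{t-1}(\mathbf{g}_{t-1}-A^{\top}\mathbf{q}_{t-1})$; $q_{t,i}=\frac{\exp(-y^{(i)}\mathbf{v}_t^{\top}\mathbf{x}^{(i)})}{\sum_{j=1}^n\exp(-y^{(j)}\mathbf{v}_t^{\top}\mathbf{x}^{(j)})}$ for $i\in[n]$; $\mathbf{g}_t=\beta_t(\mathbf{g}_{t-1}-A^{\top}\mathbf{q}_t)$. (Game dynamics.) $g(\mathbf{w},\mathbf{p})=\mathbf{p}^{\top}A\mathbf{w}-\tfrac12\|\mathbf{w}\|_2^2$, $\mathbf{p}_0=\tfrac{\mathbf{1}}{n}$, $h_j(\mathbf{w})=-g(\mathbf{w},\mathbf{p}_j)$, $\ell_j(\mathbf{p})=g(\mathbf{w}_j,\mathbf{p})$; for $t=1,\dots,T$: $\mathbf{w}_t=\arg\min_{\mathbf{w}\in\mathbb{R}^d}\sum_{j=1}^{t-1}\alpha_jh_j(\mathbf{w})+\alpha_th_{t-1}(\mathbf{w})$,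 then $\mathbf{p}_t=\arg\min_{\mathbf{p}\in\Delta^n}\tfrac14\sum_{s=1}^t\alpha_s\ell_s(\mathbf{p})+D_E(\mathbf{p},\tfrac{\mathbf{1}}{n})$; $\overline{\mathbf{w}}_T=\frac{\sum_{t=1}^T\alpha_t\mathbf{w}_t}{\sum_{t=1}^T\alpha_t}$. Then $\mathbf{q}_T=\mathbf{p}_T$ and $\mathbf{v}_T=\tfrac14\sum_{t=1}^T\alpha_t\mathbf{w}_t=\tfrac14\big(\sum_{t=1}^T\alpha_t\big)\overline{\mathbf{w}}_T$.
   Context: $\Delta^n$ is the probability simplex in $\mathbb{R}^n$; $\mathbf{1}$ the all-ones vector; $D_E(\mathbf{p},\mathbf{q})=\sum_ip_i\log(p_i/q_i)$ (KL divergence, the Bregman divergence of negative entropy). *)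

theory Defs
  imports "HOL-Analysis.Analysis"
begin

definition data_matrix :: "('n \<Rightarrow> real^'d) \<Rightarrow> ('n \<Rightarrow> real) \<Rightarrow> real^'d^'n" where
  "data_matrix x y = (\<chi> i. y i *\<^sub>R x i)"

definition unif :: "real^'n" where
  "unif = (\<chi> i. 1 / real CARD('n))"

definition prob_simplex :: "(real^'n) set" where
  "prob_simplex = {p. (\<forall>i. 0 \<le> p $ i) \<and> (\<Sum>i\<in>UNIV. p $ i) = 1}"

text \<open>KL divergence (Bregman divergence of negative entropy); 0 log 0 = 0 holds automatically.\<close>
definition KL :: "real^'n \<Rightarrow> real^'n \<Rightarrow> real" where
  "KL p q = (\<Sum>i\<in>UNIV. p $ i * ln (p $ i / q $ i))"

definition alpha :: "nat \<Rightarrow> real" where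
  "alpha t = real t"

definition perc_q :: "('n \<Rightarrow> real^'d) \<Rightarrow> ('n \<Rightarrow> real) \<Rightarrow> real^'d \<Rightarrow> real^'n" where
  "perc_q x y v = (\<chi> i. exp (- y i * (v \<bullet> x i)) / (\<Sum>j\<in>UNIV. exp (- y j * (v \<bullet> x j))))"

fun accel_perc :: "('n \<Rightarrow> real^'d) \<Rightarrow> ('n \<Rightarrow> real) \<Rightarrow> nat \<Rightarrow> (real^'d) \<times> (real^'n) \<times> (real^'d)" where
  "accel_perc x y 0 = (0, unif, 0)"
| "accel_perc x y (Suc s) =
     (let (v, q, g) = accel_perc x y s;
          t = real (Suc s);
          A = data_matrix x y;
          theta = t / (2 * (t + 1));
          beta = t / (t + 1);
          v' = v - theta *\<^sub>R (g - transpose A *v q);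
          q' = perc_q x y v';
          g' = beta *\<^sub>R (g - transpose A *v q')
      in (v', q', g'))"

definition perc_v where "perc_v x y t = fst (accel_perc x y t)"
definition perc_qs where "perc_qs x y t = fst (snd (accel_perc x y t))"
definition perc_g where "perc_g x y t = snd (snd (accel_perc x y t))"

definition game :: "real^'d^'n \<Rightarrow> real^'d \<Rightarrow> real^'n \<Rightarrow> real" where
  "game A w p = p \<bullet> (A *v w) - 1/2 * (norm w)\<^sup>2"

definition w_obj :: "real^'d^'n \<Rightarrow> (nat \<Rightarrow> real^'n) \<Rightarrow> nat \<Rightarrow> real^'d \<Rightarrow> real" where
  "w_obj A p t w = (\<Sum>j=1..<t. alpha j * (- game A w (p j))) + alpha t * (- game A w (p (t - 1)))"

definition p_obj :: "real^'d^'n \<Rightarrow> (nat \<Rightarrow> real^'d) \<Rightarrow> nat \<Rightarrow> real^'n \<Rightarrow> real" where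
  "p_obj A w t q = 1/4 * (\<Sum>s=1..t. alpha s * game A (w s) q) + KL q unif"

definition wbar :: "(nat \<Rightarrow> real^'d) \<Rightarrow> nat \<Rightarrow> real^'d" where
  "wbar w T = (1 / (\<Sum>t=1..T. alpha t)) *\<^sub>R (\<Sum>t=1..T. alpha t *\<^sub>R w t)"

end

theory Submission
  imports Defs
begin

lemma ln_less_minus_one: assumes "0 < (x::real)" "x \<noteq> 1" shows "ln x < x - 1"
proof -
  have sx: "sqrt x > 0" using assms by simp
  have "ln x = 2 * ln (sqrt x)" using assms by (simp add: ln_sqrt)
  also have "\<dots> \<le> 2 * (sqrt x - 1)" using ln_le_minus_one[OF sx] by simp
  also have "\<dots> < x - 1"
  proof -
    have "sqrt x \<noteq> 1" using assms by auto
    then have "(sqrt x - 1)^2 > 0" by simp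
    moreover have "(sqrt x)^2 = x" using assms by simp
    ultimately show ?thesis by (simp add: power2_eq_square algebra_simps)
  qed
  finally show ?thesis .
qed

lemma gibbs_term:
  assumes q: "0 \<le> (q::real)" and s: "0 < s"
  shows "q - s \<le> q * ln (q / s)" and "q * ln (q / s) = q - s \<Longrightarrow> q = s"
proof -
  show "q - s \<le> q * ln (q / s)"
  proof (cases "q = 0")
    case False
    then have qp: "q > 0" using q by simp
    have "ln (s/q) \<le> s/q - 1" using ln_le_minus_one[of "s/q"] qp s by simp
    then have "q * ln (s/q) \<le> q * (s/q - 1)" using qp by (simp add: mult_left_mono)
    moreover have "ln (q/s) = - ln (s/q)" using qp s by (simp add: ln_div)
    ultimately have "q * ln (q/s) \<ge> q * (1 - s/q)" by (simp add: algebra_simps)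
    moreover have "q*(1-s/q) = q - s" using qp by (simp add: field_simps)
    ultimately show ?thesis by linarith
  qed (use s in simp)
  assume eq: "q * ln (q / s) = q - s"
  show "q = s"
  proof (rule ccontr)
    assume ne: "q \<noteq> s"
    show False
    proof (cases "q = 0")
      case True then show False using eq s by simp
    next
      case False
      then have qp: "q > 0" using q by simp
      have "s/q \<noteq> 1" using ne qp by simp
      then have "ln (s/q) < s/q - 1" using ln_less_minus_one[of "s/q"] qp s by simp
      then have "q * ln (s/q) < q * (s/q - 1)" using qp by simp
      moreover have "ln (q/s) = - ln (s/q)" using qp s by (simp add: ln_div)
      ultimately have "q * ln (q/s) > q * (1 - s/q)" by (simp add: algebra_simps)
      moreover have "q*(1-s/q) = q - s" using qp by (simp add: field_simps)
      ultimately show False using eq by linarith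
    qed
  qed
qed

lemma softmax_argmin:
  fixes c :: "'n::finite \<Rightarrow> real" and f :: "real^'n \<Rightarrow> real"
  assumes am: "is_arg_min f (\<lambda>q. q \<in> prob_simplex) z"
    and f: "\<And>q. q \<in> prob_simplex \<Longrightarrow> f q = (\<Sum>i\<in>UNIV. q$i * c i) + KL q unif + K"
  shows "z = (\<chi> i. exp (- c i) / (\<Sum>j\<in>UNIV. exp (- c j)))"
proof -
  define Z where "Z = (\<Sum>j\<in>UNIV. exp (- c j))"
  define s :: "real^'n" where "s = (\<chi> i. exp (- c i) / Z)"
  have Zp: "Z > 0" unfolding Z_def by (simp add: sum_pos)
  have sp: "s$i > 0" for i using Zp by (simp add: s_def)
  have ssum: "(\<Sum>i\<in>UNIV. s$i) = 1" using Zp by (simp add: s_def Z_def flip: sum_divide_distrib)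
  have sS: "s \<in> prob_simplex" unfolding prob_simplex_def using sp ssum by (auto intro: less_imp_le)
  have zS: "z \<in> prob_simplex" using am by (simp add: is_arg_min_def)
  have cardp: "real CARD('n) > 0" by simp
  have key: "f q = KL q s + (ln (real CARD('n)) - ln Z + K)" if qS: "q \<in> prob_simplex" for q
  proof -
    have q0: "q$i \<ge> 0" for i using qS by (simp add: prob_simplex_def)
    have q1: "(\<Sum>i\<in>UNIV. q$i) = 1" using qS by (simp add: prob_simplex_def)
    have tm: "q$i * c i + q$i * ln (q$i / unif$i) = q$i * ln (q$i / s$i) + q$i * (ln (real CARD('n)) - ln Z)" for i
    proof (cases "q$i = 0")
      case False
      then have qp: "q$i > 0" using q0[of i] by simp
      have "ln (q$i / unif$i) = ln (q$i) + ln (real CARD('n))"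
        using qp cardp by (simp add: unif_def ln_div ln_mult)
      moreover have "ln (q$i / s$i) = ln (q$i) + c i + ln Z"
        using qp Zp by (simp add: s_def ln_div ln_mult)
      ultimately show ?thesis by (simp add: algebra_simps)
    qed simp
    have "f q = (\<Sum>i\<in>UNIV. q$i * c i + q$i * ln (q$i / unif$i)) + K"
      using f[OF qS] by (simp add: KL_def sum.distrib)
    also have "\<dots> = (\<Sum>i\<in>UNIV. q$i * ln (q$i / s$i)) + (\<Sum>i\<in>UNIV. q$i) * (ln (real CARD('n)) - ln Z) + K"
      by (simp add: tm sum.distrib sum_distrib_right)
    finally show ?thesis using q1 by (simp add: KL_def)
  qed
  have KLss: "KL s s = 0" unfolding KL_def by (rule sum.neutral) simp
  have "f z \<le> f s" using am sS unfolding is_arg_min_def by (meson not_le)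
  then have KLz: "KL z s \<le> 0" using key[OF zS] key[OF sS] KLss by simp
  have z0: "z$i \<ge> 0" for i using zS by (simp add: prob_simplex_def)
  have z1: "(\<Sum>i\<in>UNIV. z$i) = 1" using zS by (simp add: prob_simplex_def)
  define d where "d i = z$i * ln (z$i / s$i) - (z$i - s$i)" for i
  have dnn: "d i \<ge> 0" for i using gibbs_term(1)[OF z0 sp] by (simp add: d_def)
  have "(\<Sum>i\<in>UNIV. d i) = KL z s" using z1 ssum by (simp add: d_def KL_def sum_subtractf)
  then have "(\<Sum>i\<in>UNIV. d i) = 0" using KLz dnn by (smt (verit) sum_nonneg)
  then have "d i = 0" for i using dnn by (simp add: sum_nonneg_eq_0_iff)
  then have "z$i = s$i" for i using gibbs_term(2)[OF z0 sp] by (simp add: d_def)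
  then show ?thesis by (simp add: vec_eq_iff s_def Z_def)
qed

lemma inner_mat: fixes A :: "real^'d^'n"
  shows "p \<bullet> (A *v w) = (transpose A *v p) \<bullet> w"
  unfolding inner_vec_def matrix_vector_mult_def transpose_def
  apply (simp add: sum_distrib_left sum_distrib_right)
  apply (subst sum.swap) apply (simp add: mult_ac)
  done

lemma sum_alpha: "(\<Sum>j=1..t. alpha j) = real t * (real t + 1) / 2"
  by (induction t) (auto simp: alpha_def field_simps)

lemma quad_argmin:
  fixes f :: "'a::real_inner \<Rightarrow> real"
  assumes S: "S > 0" and am: "is_arg_min f (\<lambda>_. True) z"
    and f: "\<And>w. f w = S/2 * (norm w)^2 - b \<bullet> w"
  shows "z = (1/S) *\<^sub>R b"
proof -
  have le: "f z \<le> f ((1/S) *\<^sub>R b)" using am unfolding is_arg_min_def by (meson not_le)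
  have eq: "f w - f ((1/S) *\<^sub>R b) = S/2 * (norm (w - (1/S) *\<^sub>R b))^2" for w
    using S unfolding f power2_norm_eq_inner
    by (simp add: inner_diff_left inner_diff_right inner_commute field_simps power2_eq_square)
  have "(norm (z - (1/S) *\<^sub>R b))^2 \<le> 0" using eq[of z] le S
    by (smt (verit) mult_pos_pos zero_less_power2 divide_pos_pos)
  then show ?thesis by simp
qed

lemma dm_apply: "(data_matrix x y *v w) $ i = y i * (x i \<bullet> w)"
  by (simp add: data_matrix_def matrix_vector_mult_def inner_vec_def sum_distrib_left mult_ac)

lemma w_formula:
  fixes A :: "real^'d^'n"
  assumes am: "is_arg_min (w_obj A p (Suc s)) (\<lambda>_. True) z"
  shows "z = (1 / (\<Sum>j=1..Suc s. alpha j)) *\<^sub>R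
     ((\<Sum>j=1..s. alpha j *\<^sub>R (transpose A *v p j)) + alpha (Suc s) *\<^sub>R (transpose A *v p s))"
proof (rule quad_argmin[OF _ am])
  show "0 < (\<Sum>j=1..Suc s. alpha j)" by (subst sum_alpha) simp
  fix w :: "real^'d"
  have hh: "(\<Sum>j=1..s. alpha j * (norm w)^2 / 2) = (\<Sum>j=1..s. alpha j) * (norm w)^2 / 2"
    by (simp add: sum_distrib_right sum_divide_distrib)
  have "w_obj A p (Suc s) w = (\<Sum>j=1..s. alpha j * (1/2 * (norm w)^2) - alpha j * ((transpose A *v p j) \<bullet> w))
     + (alpha (Suc s) * (1/2 * (norm w)^2) - alpha (Suc s) * ((transpose A *v p s) \<bullet> w))"
    unfolding w_obj_def game_def inner_mat
    by (simp add: atLeastLessThanSuc_atLeastAtMost algebra_simps)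
  also have "\<dots> = (\<Sum>j=1..Suc s. alpha j) / 2 * (norm w)^2 -
     ((\<Sum>j=1..s. alpha j *\<^sub>R (transpose A *v p j)) + alpha (Suc s) *\<^sub>R (transpose A *v p s)) \<bullet> w"
    using hh by (simp add: sum_subtractf inner_sum_left inner_add_left algebra_simps)
  finally show "w_obj A p (Suc s) w = (\<Sum>j=1..Suc s. alpha j) / 2 * (norm w)^2 -
     ((\<Sum>j=1..s. alpha j *\<^sub>R (transpose A *v p j)) + alpha (Suc s) *\<^sub>R (transpose A *v p s)) \<bullet> w" .
qed

lemma p_formula:
  fixes x :: "'n::finite \<Rightarrow> real^'d::finite" and y :: "'n \<Rightarrow> real"
  assumes am: "is_arg_min (p_obj (data_matrix x y) w t) (\<lambda>q. q \<in> prob_simplex) z"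
  shows "z = perc_q x y ((1/4) *\<^sub>R (\<Sum>s=1..t. alpha s *\<^sub>R w s))"
proof -
  define V where "V = (1/4) *\<^sub>R (\<Sum>s=1..t. alpha s *\<^sub>R w s)"
  define K where "K = - (1/4 * (\<Sum>s=1..t. alpha s * (1/2 * (norm (w s))^2)))"
  have "z = (\<chi> i. exp (- (y i * (V \<bullet> x i))) / (\<Sum>j\<in>UNIV. exp (- (y j * (V \<bullet> x j)))))"
  proof (rule softmax_argmin[OF am])
    fix q :: "real^'n"
    assume "q \<in> prob_simplex"
    have Vx: "V \<bullet> x i = 1/4 * (\<Sum>s=1..t. alpha s * (w s \<bullet> x i))" for i
      by (simp add: V_def inner_sum_left)
    have "(\<Sum>i\<in>UNIV. q$i * (y i * (V \<bullet> x i))) = 1/4 * (\<Sum>s=1..t. alpha s * (\<Sum>i\<in>UNIV. q$i * (y i * (w s \<bullet> x i))))"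
      unfolding Vx
      apply (simp add: sum_distrib_left)
      apply (subst sum.swap) apply (simp add: mult_ac)
      done
    also have "\<dots> = 1/4 * (\<Sum>s=1..t. alpha s * (q \<bullet> (data_matrix x y *v w s)))"
      by (simp add: inner_vec_def dm_apply mult.commute)
    finally have e: "(\<Sum>i\<in>UNIV. q$i * (y i * (V \<bullet> x i))) = 1/4 * (\<Sum>s=1..t. alpha s * (q \<bullet> (data_matrix x y *v w s)))" .
    show "p_obj (data_matrix x y) w t q = (\<Sum>i\<in>UNIV. q$i * (y i * (V \<bullet> x i))) + KL q unif + K"
      unfolding e p_obj_def game_def K_def
      by (simp add: algebra_simps sum_subtractf sum_distrib_left)
  qed
  then show ?thesis by (simp add: perc_q_def V_def)
qed

lemma vid:
  fixes B A :: "real^'d"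
  assumes d: "d > 0" and e: "e > 0"
  shows "(d/(2*e)) *\<^sub>R ((1/d) *\<^sub>R B + A) = (1/4 * d) *\<^sub>R ((1/(d*e/2)) *\<^sub>R (B + d *\<^sub>R A))"
  using d e by (simp add: vec_eq_iff field_simps)

lemma gid:
  fixes B A :: "real^'d"
  assumes d: "d > 0" and e: "e > 0"
  shows "(d/e) *\<^sub>R ((- (1/d)) *\<^sub>R B - A) = (- (1/e)) *\<^sub>R (B + d *\<^sub>R A)"
  using d e by (simp add: vec_eq_iff field_simps)

theorem proposition2:
  fixes x :: "'n::finite \<Rightarrow> real^'d::finite" and y :: "'n \<Rightarrow> real"
    and w :: "nat \<Rightarrow> real^'d" and p :: "nat \<Rightarrow> real^'n" and T :: nat
  assumes y_pm: "\<And>i. y i \<in> {-1, 1}"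
    and p0: "p 0 = unif"
    and w_argmin: "\<And>t. 1 \<le> t \<Longrightarrow> t \<le> T \<Longrightarrow>
        is_arg_min (w_obj (data_matrix x y) p t) (\<lambda>_. True) (w t)"
    and p_argmin: "\<And>t. 1 \<le> t \<Longrightarrow> t \<le> T \<Longrightarrow>
        is_arg_min (p_obj (data_matrix x y) w t) (\<lambda>q. q \<in> prob_simplex) (p t)"
  shows "perc_qs x y T = p T
    \<and> perc_v x y T = (1/4) *\<^sub>R (\<Sum>t=1..T. alpha t *\<^sub>R w t)
    \<and> perc_v x y T = (1/4 * (\<Sum>t=1..T. alpha t)) *\<^sub>R wbar w T"
proof -
  define M where "M = data_matrix x y"
  define a where "a j = transpose M *v p j" for j
  define V where "V t = (1/4) *\<^sub>R (\<Sum>s=1..t. alpha s *\<^sub>R w s)" for t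
  define G where "G t = (- (1 / (real t + 1))) *\<^sub>R (\<Sum>j=1..t. real j *\<^sub>R a j)" for t
  have W: "w (Suc s) = (1 / (\<Sum>j=1..Suc s. alpha j)) *\<^sub>R
     ((\<Sum>j=1..s. alpha j *\<^sub>R a j) + alpha (Suc s) *\<^sub>R a s)" if "Suc s \<le> T" for s
    unfolding a_def M_def by (rule w_formula) (use w_argmin[of "Suc s"] that in simp)
  have P: "p t = perc_q x y (V t)" if "1 \<le> t" "t \<le> T" for t
    unfolding V_def by (rule p_formula[OF p_argmin[OF that]])
  have main: "perc_v x y t = V t \<and> perc_qs x y t = p t \<and> perc_g x y t = G t" if "t \<le> T" for t
    using that
  proof (induction t)
    case 0
    then show ?case by (simp add: perc_v_def perc_qs_def perc_g_def V_def G_def p0)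
  next
    case (Suc s)
    then have IH: "perc_v x y s = V s" "perc_qs x y s = p s" "perc_g x y s = G s" by auto
    obtain v q g where vqg: "accel_perc x y s = (v, q, g)" by (metis prod_cases3)
    have v: "v = V s" and q: "q = p s" and g: "g = G s"
      using IH vqg by (auto simp: perc_v_def perc_qs_def perc_g_def)
    define th where "th = real (Suc s) / (2 * (real (Suc s) + 1))"
    define be where "be = real (Suc s) / (real (Suc s) + 1)"
    define v' where "v' = v - th *\<^sub>R (g - transpose M *v q)"
    have pv: "perc_v x y (Suc s) = v'"
      by (simp add: perc_v_def vqg v'_def th_def M_def Let_def)
    have Sv: "(\<Sum>j=1..Suc s. alpha j) = (real s + 1) * (real s + 2) / 2"
      by (subst sum_alpha) (simp add: field_simps)
    have Wv: "V (Suc s) = V s + (1/4 * alpha (Suc s)) *\<^sub>R w (Suc s)"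
      by (simp add: V_def scaleR_add_right)
    define B where "B = (\<Sum>j=1..s. real j *\<^sub>R a j)"
    have tq: "transpose M *v q = a s" using q by (simp add: a_def)
    have Bs: "(\<Sum>j=1..s. alpha j *\<^sub>R a j) = B" by (simp add: B_def alpha_def)
    have Gs: "G s = (- (1 / (real s + 1))) *\<^sub>R B" by (simp add: G_def B_def)
    have GS: "G (Suc s) = (- (1 / (real s + 2))) *\<^sub>R (B + real (Suc s) *\<^sub>R a (Suc s))"
      by (simp add: G_def B_def add.commute)
    have v'V: "v' = V (Suc s)"
    proof -
      have "v' = V s + (real (Suc s)/(2*(real (Suc s)+1))) *\<^sub>R ((1/(real s+1)) *\<^sub>R B + a s)"
        unfolding v'_def v g tq Gs th_def by (simp add: algebra_simps)
      also have "\<dots> = V s + (1/4 * (real s+1)) *\<^sub>R ((1/((real s+1)*(real s+2)/2)) *\<^sub>R (B + (real s+1) *\<^sub>R a s))"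
        using vid[of "real s + 1" "real s + 2" B "a s"] by (simp add: add.commute)
      also have "\<dots> = V (Suc s)"
        unfolding Wv W[OF Suc.prems] Sv Bs by (simp add: alpha_def add.commute)
      finally show ?thesis .
    qed
    have pS: "perc_q x y v' = p (Suc s)" using P[of "Suc s"] Suc.prems v'V by simp
    have tS: "transpose M *v p (Suc s) = a (Suc s)" by (simp add: a_def)
    have pq: "perc_qs x y (Suc s) = p (Suc s)"
    proof -
      have "perc_qs x y (Suc s) = perc_q x y v'"
        by (simp add: perc_qs_def vqg Let_def v'_def th_def M_def)
      then show ?thesis using pS by simp
    qed
    have g': "perc_g x y (Suc s) = be *\<^sub>R (g - a (Suc s))"
    proof -
      have "perc_g x y (Suc s) = be *\<^sub>R (g - transpose M *v perc_q x y v')"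
        by (simp add: perc_g_def vqg Let_def v'_def th_def be_def M_def)
      then show ?thesis using pS tS by simp
    qed
    have pg: "perc_g x y (Suc s) = G (Suc s)"
      unfolding g' GS g Gs be_def using gid[of "real s + 1" "real s + 2" B "a (Suc s)"]
      by (simp add: add.commute)
    show ?case using pv v'V pq pg by simp
  qed
  have m: "perc_v x y T = V T" "perc_qs x y T = p T" using main[of T] by auto
  have wb: "(1/4 * (\<Sum>t=1..T. alpha t)) *\<^sub>R wbar w T = V T"
  proof (cases "T = 0")
    case True then show ?thesis by (simp add: wbar_def V_def)
  next
    case False
    then have "(\<Sum>t=1..T. alpha t) \<noteq> 0" by (subst sum_alpha) simp
    then show ?thesis by (simp add: wbar_def V_def)
  qed
  show ?thesis using m wb by (simp add: V_def)
qed

end
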